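(* For every integer $n\ge4$: $\gamma_{(2,1,1)}(P_n)=\frac{2n}{3}+1$ if $n\equiv0\pmod3$ and $\gamma_{(2,1,1)}(P_n)=2\lceil n/3\rceil$ otherwise; and $\gamma_{(2,1,1)}(C_n)=\lceil 2n/3\rceil$.
   Context: $P_n$ and $C_n$ denote the path and the cycle on $n$ vertices. For a graph $G$, a function $f:V(G)\to\{0,1,2\}$ is a $(2,1,1)$-dominating function if $\sum_{u\in N(v)}f(u)\ge2$ for every vertex $v$ with $f(v)=0$, and $\sum_{u\in N(v)}f(u)\ge1$ for every vertex $v$ with $f(v)\in\{1,2\}$, where $N(v)$ is the open neighbourhood. $\gamma_{(2,1,1)}(G)$ is the minimum of $\sum_{v}f(v)$ over all $(2,1,1)$-dominating functions $f$. *)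

theory Defs
  imports Complex_Main
begin

text \<open>A finite simple graph is given by a vertex set V and a symmetric irreflexive
adjacency relation E. Open neighbourhood of v: the vertices of V adjacent to v.\<close>

definition nbhd :: "'a set \<Rightarrow> ('a \<Rightarrow> 'a \<Rightarrow> bool) \<Rightarrow> 'a \<Rightarrow> 'a set" where
  "nbhd V E v = {u \<in> V. E v u}"

definition is_211_dom :: "'a set \<Rightarrow> ('a \<Rightarrow> 'a \<Rightarrow> bool) \<Rightarrow> ('a \<Rightarrow> nat) \<Rightarrow> bool" where
  "is_211_dom V E f \<longleftrightarrow>
     (\<forall>v. v \<notin> V \<longrightarrow> f v = 0) \<and>
     (\<forall>v\<in>V. f v \<le> 2) \<and>
     (\<forall>v\<in>V. f v = 0 \<longrightarrow> (\<Sum>u\<in>nbhd V E v. f u) \<ge> 2) \<and>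
     (\<forall>v\<in>V. f v \<in> {1,2} \<longrightarrow> (\<Sum>u\<in>nbhd V E v. f u) \<ge> 1)"

definition gamma_211 :: "'a set \<Rightarrow> ('a \<Rightarrow> 'a \<Rightarrow> bool) \<Rightarrow> nat" where
  "gamma_211 V E = (LEAST w. \<exists>f. is_211_dom V E f \<and> w = (\<Sum>v\<in>V. f v))"

definition path_adj :: "nat \<Rightarrow> nat \<Rightarrow> bool" where
  "path_adj i j \<longleftrightarrow> i = j + 1 \<or> j = i + 1"

definition cycle_adj :: "nat \<Rightarrow> nat \<Rightarrow> nat \<Rightarrow> bool" where
  "cycle_adj n i j \<longleftrightarrow> i \<noteq> j \<and> (j = (i + 1) mod n \<or> i = (j + 1) mod n)"

definition P :: "nat \<Rightarrow> nat set \<times> (nat \<Rightarrow> nat \<Rightarrow> bool)" where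
  "P n = ({0..<n}, path_adj)"

definition C :: "nat \<Rightarrow> nat set \<times> (nat \<Rightarrow> nat \<Rightarrow> bool)" where
  "C n = ({0..<n}, cycle_adj n)"

definition gamma_211_graph :: "'a set \<times> ('a \<Rightarrow> 'a \<Rightarrow> bool) \<Rightarrow> nat" where
  "gamma_211_graph G = gamma_211 (fst G) (snd G)"

end

theory Submission
  imports Defs
begin

definition ps :: "nat \<Rightarrow> (nat \<Rightarrow> nat) \<Rightarrow> nat \<Rightarrow> nat" where
  "ps n f v = (if 0 < v then f (v - 1) else 0) + (if v + 1 < n then f (v + 1) else 0)"

definition sc :: "nat \<Rightarrow> nat \<Rightarrow> nat" where
  "sc n v = (if v + 1 < n then v + 1 else 0)"

definition pr :: "nat \<Rightarrow> nat \<Rightarrow> nat" where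
  "pr n v = (if v = 0 then n - 1 else v - 1)"

lemma path_nb:
  assumes "v < n"
  shows "(\<Sum>u\<in>nbhd {0..<n} path_adj v. f u) = ps n f v"
proof (cases "0 < v")
  case True
  then show ?thesis
  proof (cases "v + 1 < n")
    case True
    have "nbhd {0..<n} path_adj v = {v - 1, v + 1}"
      using \<open>0 < v\<close> True by (auto simp: nbhd_def path_adj_def)
    then show ?thesis using \<open>0 < v\<close> True by (simp add: ps_def)
  next
    case False
    have "nbhd {0..<n} path_adj v = {v - 1}"
      using \<open>0 < v\<close> False assms by (auto simp: nbhd_def path_adj_def)
    then show ?thesis using \<open>0 < v\<close> False by (simp add: ps_def)
  qed
next
  case False
  then show ?thesis
  proof (cases "v + 1 < n")
    case True
    have "nbhd {0..<n} path_adj v = {v + 1}"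
      using \<open>\<not> 0 < v\<close> True by (auto simp: nbhd_def path_adj_def)
    then show ?thesis using \<open>\<not> 0 < v\<close> True by (simp add: ps_def)
  next
    case False
    have "nbhd {0..<n} path_adj v = {}"
      using \<open>\<not> 0 < v\<close> False assms by (auto simp: nbhd_def path_adj_def)
    then show ?thesis using \<open>\<not> 0 < v\<close> False by (simp add: ps_def)
  qed
qed

lemma mod_suc: "x < n \<Longrightarrow> (x + 1) mod (n::nat) = sc n x"
proof (cases "x + 1 < n")
  case False
  assume "x < n"
  then have "x + 1 = n" using False by simp
  then show ?thesis using False by (simp add: sc_def)
qed (auto simp: sc_def)

lemma cyc_nb:
  assumes "v < n" "3 \<le> n"
  shows "(\<Sum>u\<in>nbhd {0..<n} (cycle_adj n) v. f u) = f (sc n v) + f (pr n v)"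
proof -
  have "u \<in> nbhd {0..<n} (cycle_adj n) v \<longleftrightarrow> u = sc n v \<or> u = pr n v" for u
  proof -
    have "u \<in> nbhd {0..<n} (cycle_adj n) v \<longleftrightarrow> u < n \<and> u \<noteq> v \<and> (u = sc n v \<or> v = sc n u)"
      using assms mod_suc[of v n] mod_suc[of u n] by (auto simp: nbhd_def cycle_adj_def)
    also have "\<dots> \<longleftrightarrow> u = sc n v \<or> u = pr n v"
      using assms by (auto simp: sc_def pr_def split: if_splits)
    finally show ?thesis .
  qed
  then have "nbhd {0..<n} (cycle_adj n) v = {sc n v, pr n v}" by blast
  moreover have "sc n v \<noteq> pr n v" using assms by (auto simp: sc_def pr_def)
  ultimately show ?thesis by simp
qed

lemma path_sum:
  assumes "n = Suc m"
  shows "(\<Sum>v<n. ps n f v) + f 0 + f (n - 1) = 2 * (\<Sum>v<n. f v)"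
proof -
  have a: "(\<Sum>v<Suc m. (if 0 < v then f (v - 1) else 0)) = (\<Sum>v<m. f v)"
    by (subst sum.lessThan_Suc_shift) simp
  have b: "(\<Sum>v<Suc m. (if v + 1 < Suc m then f (v + 1) else 0)) = (\<Sum>v<m. f (Suc v))"
    by (simp add: sum.lessThan_Suc)
  have c: "(\<Sum>v<Suc m. f v) = (\<Sum>v<m. f v) + f m" by simp
  have d: "(\<Sum>v<Suc m. f v) = f 0 + (\<Sum>v<m. f (Suc v))" by (subst sum.lessThan_Suc_shift) simp
  show ?thesis using a b c d assms by (simp add: ps_def sum.distrib)
qed

lemma cyc_sum:
  assumes "n = Suc m"
  shows "(\<Sum>v<n. f (sc n v) + f (pr n v)) = (2::nat) * (\<Sum>v<n. f v)"
proof -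
  have a: "(\<Sum>v<Suc m. f (sc (Suc m) v)) = (\<Sum>v<m. f (Suc v)) + f 0"
    by (simp add: sum.lessThan_Suc sc_def)
  have b: "(\<Sum>v<Suc m. f (pr (Suc m) v)) = f m + (\<Sum>v<m. f v)"
    by (subst sum.lessThan_Suc_shift) (simp add: pr_def)
  have c: "(\<Sum>v<Suc m. f v) = (\<Sum>v<m. f v) + f m" by simp
  have d: "(\<Sum>v<Suc m. f v) = f 0 + (\<Sum>v<m. f (Suc v))" by (subst sum.lessThan_Suc_shift) simp
  show ?thesis using a b c d assms by (simp add: sum.distrib)
qed

lemma path_dom:
  assumes "is_211_dom {0..<n} path_adj f" "v < n"
  shows "f v \<le> 2 \<and> (f v = 0 \<longrightarrow> ps n f v \<ge> 2) \<and> (f v \<noteq> 0 \<longrightarrow> ps n f v \<ge> 1)"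
proof -
  have v: "v \<in> {0..<n}" using assms(2) by simp
  have A: "\<forall>v\<in>{0..<n}. f v \<le> 2" and B: "\<forall>v\<in>{0..<n}. f v = 0 \<longrightarrow> (\<Sum>u\<in>nbhd {0..<n} path_adj v. f u) \<ge> 2"
    and E: "\<forall>v\<in>{0..<n}. f v \<in> {1,2} \<longrightarrow> (\<Sum>u\<in>nbhd {0..<n} path_adj v. f u) \<ge> 1"
    using assms(1) unfolding is_211_dom_def by blast+
  have a: "f v \<le> 2" using bspec[OF A v] .
  have b: "f v = 0 \<longrightarrow> ps n f v \<ge> 2" using bspec[OF B v] path_nb[OF assms(2), of f] by simp
  have c: "f v \<in> {1,2} \<longrightarrow> ps n f v \<ge> 1" using bspec[OF E v] path_nb[OF assms(2), of f] by simp
  have "f v \<noteq> 0 \<Longrightarrow> f v \<in> {1,2}" using a by auto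
  then show ?thesis using a b c by blast
qed

lemma path_lower:
  assumes "is_211_dom {0..<n} path_adj f" "4 \<le> n"
  shows "2 * n + 2 \<le> 3 * (\<Sum>v<n. f v)"
proof -
  define a :: nat where "a = (if f 0 = 0 then 1 else 0)"
  define b :: nat where "b = (if f (n - 1) = 0 then 1 else 0)"
  have D: "\<And>v. v < n \<Longrightarrow> f v \<le> 2 \<and> (f v = 0 \<longrightarrow> ps n f v \<ge> 2) \<and> (f v \<noteq> 0 \<longrightarrow> ps n f v \<ge> 1)"
    using path_dom[OF assms(1)] by blast
  have p0: "ps n f 0 = f 1" using assms(2) by (simp add: ps_def)
  have pn: "ps n f (n - 1) = f (n - 2)"
  proof -
    have "n - 1 - 1 = n - 2" "0 < n - 1" "\<not> n - 1 + 1 < n" using assms(2) by auto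
    then show ?thesis unfolding ps_def by simp
  qed
  have fa: "f 1 = 2" if "a = 1"
  proof -
    have "f 0 = 0" using that unfolding a_def by (cases "f 0 = 0") simp_all
    moreover have "0 < n" "1 < n" using assms(2) by auto
    ultimately have "ps n f 0 \<ge> 2" using D by blast
    then have "f 1 \<ge> 2" using p0 by simp
    moreover have "f 1 \<le> 2" using D \<open>1 < n\<close> by blast
    ultimately show ?thesis by simp
  qed
  have fb: "f (n - 2) = 2" if "b = 1"
  proof -
    have "f (n - 1) = 0" using that unfolding b_def by (cases "f (n - 1) = 0") simp_all
    moreover have "n - 1 < n" "n - 2 < n" using assms(2) by auto
    ultimately have "ps n f (n - 1) \<ge> 2" using D by blast
    then have "f (n - 2) \<ge> 2" using pn by simp
    moreover have "f (n - 2) \<le> 2" using D \<open>n - 2 < n\<close> by blast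
    ultimately show ?thesis by simp
  qed
  have a1: "a \<le> 1" and b1: "b \<le> 1" by (auto simp: a_def b_def)
  have h: "2 + (if v = 1 then a else 0) + (if v = n - 2 then b else 0) \<le> f v + ps n f v" if "v < n" for v
  proof -
    have g: "2 \<le> f v + ps n f v" using D[OF that] by (cases "f v = 0") auto
    have g2: "f v = 2 \<Longrightarrow> 3 \<le> f v + ps n f v" using D[OF that] by auto
    have ne: "(1::nat) \<noteq> n - 2" using assms(2) by auto
    show ?thesis
    proof (cases "v = 1")
      case True
      then have "v \<noteq> n - 2" using ne by simp
      then show ?thesis using True g g2 fa a1 by (cases "a = 1") auto
    next
      case False
      then show ?thesis
      proof (cases "v = n - 2")
        case True
        then show ?thesis using False g g2 fb b1 by (cases "b = 1") auto
      qed (use g in simp)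
    qed
  qed
  have S1: "(\<Sum>v<n. 2 + (if v = 1 then a else 0) + (if v = n - 2 then b else 0)) \<le> (\<Sum>v<n. f v + ps n f v)"
    by (rule sum_mono) (use h in simp)
  have S2: "(\<Sum>v<n. 2 + (if v = 1 then a else 0) + (if v = n - 2 then b else 0)) = 2 * n + a + b"
  proof -
    have "(\<Sum>v<n. 2 + (if v = 1 then a else 0) + (if v = n - 2 then b else 0))
        = (\<Sum>v<n. (2::nat)) + (\<Sum>v<n. (if v = 1 then a else 0)) + (\<Sum>v<n. (if v = n - 2 then b else 0))"
      by (simp only: sum.distrib)
    also have "(\<Sum>v<n. (if v = 1 then a else 0)) = a" using assms(2) by (simp add: sum.delta)
    also have "(\<Sum>v<n. (if v = n - 2 then b else 0)) = b" using assms(2) by (simp add: sum.delta)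
    finally show ?thesis by simp
  qed
  obtain m where "n = Suc m" using assms(2) by (cases n) auto
  note ps = path_sum[OF this, of f]
  have S3: "(\<Sum>v<n. f v + ps n f v) = (\<Sum>v<n. f v) + (\<Sum>v<n. ps n f v)" by (simp only: sum.distrib)
  have "a + f 0 \<ge> 1" "b + f (n - 1) \<ge> 1" by (auto simp: a_def b_def)
  then show ?thesis using S1 S2 S3 ps by linarith
qed

lemma cyc_dom:
  assumes "is_211_dom {0..<n} (cycle_adj n) f" "v < n" "3 \<le> n"
  shows "2 \<le> f v + (f (sc n v) + f (pr n v))"
proof -
  have v: "v \<in> {0..<n}" using assms(2) by simp
  have A: "\<forall>v\<in>{0..<n}. f v \<le> 2" and B: "\<forall>v\<in>{0..<n}. f v = 0 \<longrightarrow> (\<Sum>u\<in>nbhd {0..<n} (cycle_adj n) v. f u) \<ge> 2"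
    and E: "\<forall>v\<in>{0..<n}. f v \<in> {1,2} \<longrightarrow> (\<Sum>u\<in>nbhd {0..<n} (cycle_adj n) v. f u) \<ge> 1"
    using assms(1) unfolding is_211_dom_def by blast+
  have a: "f v \<le> 2" using bspec[OF A v] .
  have b: "f v = 0 \<longrightarrow> f (sc n v) + f (pr n v) \<ge> 2" using bspec[OF B v] cyc_nb[OF assms(2,3), of f] by simp
  have c: "f v \<in> {1,2} \<longrightarrow> f (sc n v) + f (pr n v) \<ge> 1" using bspec[OF E v] cyc_nb[OF assms(2,3), of f] by simp
  have "f v \<noteq> 0 \<Longrightarrow> f v \<in> {1,2}" using a by auto
  then show ?thesis using b c by (cases "f v = 0") auto
qed

lemma cyc_lower:
  assumes "is_211_dom {0..<n} (cycle_adj n) f" "3 \<le> n"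
  shows "2 * n \<le> 3 * (\<Sum>v<n. f v)"
proof -
  have S1: "(\<Sum>v<n. (2::nat)) \<le> (\<Sum>v<n. f v + (f (sc n v) + f (pr n v)))"
    by (rule sum_mono) (use cyc_dom[OF assms(1) _ assms(2)] in simp)
  obtain m where "n = Suc m" using assms(2) by (cases n) auto
  note cs = cyc_sum[OF this, of f]
  have S3: "(\<Sum>v<n. f v + (f (sc n v) + f (pr n v))) = (\<Sum>v<n. f v) + (\<Sum>v<n. f (sc n v) + f (pr n v))"
    by (simp only: sum.distrib)
  show ?thesis using S1 S3 cs by simp
qed

definition fP :: "nat \<Rightarrow> nat \<Rightarrow> nat" where
  "fP n i = (if i < n then (if i mod 3 = 2 \<and> i + 2 < n then 0 else 1) else 0)"

definition fC :: "nat \<Rightarrow> nat \<Rightarrow> nat" where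
  "fC n i = (if i < n then (if i mod 3 = 2 then 0 else 1) else 0)"

lemma S_count: "(\<Sum>i<m. (if i mod 3 = 2 then 0 else 1::nat)) = m - m div 3"
proof (induction m)
  case 0
  then show ?case by simp
next
  case (Suc m)
  have "(\<Sum>i<Suc m. (if i mod 3 = 2 then 0 else 1::nat)) = m - m div 3 + (if m mod 3 = 2 then 0 else 1)"
    using Suc by simp
  also have "\<dots> = Suc m - Suc m div 3" by (simp add: div_Suc mod_Suc)
  finally show ?case .
qed

lemma fP_sum:
  assumes "2 \<le> n"
  shows "(\<Sum>i<n. fP n i) = n - (n - 2) div 3"
proof -
  obtain k where k: "n = k + 2" using assms by (metis add.commute le_iff_add)
  have "(\<Sum>i<n. fP n i) = (\<Sum>i<k. fP n i) + fP n k + fP n (Suc k)"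
    using k by simp
  also have "(\<Sum>i<k. fP n i) = (\<Sum>i<k. (if i mod 3 = 2 then 0 else 1::nat))"
    by (rule sum.cong) (auto simp: fP_def k)
  finally have "(\<Sum>i<n. fP n i) = (\<Sum>i<k. (if i mod 3 = 2 then 0 else 1::nat)) + fP n k + fP n (Suc k)" .
  moreover have "fP n k = 1" "fP n (Suc k) = 1" by (auto simp: fP_def k)
  ultimately show ?thesis using S_count[of k] k by simp
qed

lemma fC_sum: "(\<Sum>i<n. fC n i) = n - n div 3"
proof -
  have "(\<Sum>i<n. fC n i) = (\<Sum>i<n. (if i mod 3 = 2 then 0 else 1::nat))"
    by (rule sum.cong) (auto simp: fC_def)
  then show ?thesis using S_count[of n] by simp
qed

lemma fP_zero:
  assumes "v < n" "fP n v = 0"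
  shows "2 \<le> ps n (fP n) v"
proof -
  have h: "v mod 3 = 2" "v + 2 < n" using assms by (auto simp: fP_def split: if_splits)
  have m1: "(v - 1) mod 3 = 1" using h(1) by (cases v) (auto simp: mod_Suc split: if_splits)
  have m2: "0 < v" using h(1) by (cases v) auto
  have m3: "(v + 1) mod 3 = 0" using h(1) by (auto simp: mod_Suc)
  note m = m1 m2 m3
  have "fP n (v - 1) = 1" "fP n (v + 1) = 1" using h m by (auto simp: fP_def)
  then show ?thesis using m h by (simp add: ps_def)
qed

lemma fP_nz:
  assumes "v < n" "4 \<le> n"
  shows "1 \<le> ps n (fP n) v"
proof (cases "v = 0")
  case True
  have "fP n 1 = 1" using assms by (simp add: fP_def)
  then show ?thesis using True assms by (simp add: ps_def)
next
  case False
  show ?thesis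
  proof (cases "fP n (v - 1) = 0")
    case True
    then have h: "(v - 1) mod 3 = 2" "v + 1 < n" using False assms(1) by (auto simp: fP_def split: if_splits)
    have "(v + 1) mod 3 = 1" using h(1) False by (cases v) (auto simp: mod_Suc)
    then have "fP n (v + 1) = 1" using h by (simp add: fP_def)
    then show ?thesis using h by (simp add: ps_def)
  next
    case F2: False
    then show ?thesis using False by (simp add: ps_def)
  qed
qed

lemma fP_dom:
  assumes "4 \<le> n"
  shows "is_211_dom {0..<n} path_adj (fP n)"
proof -
  have le: "fP n v \<le> 2" for v by (simp add: fP_def)
  have out: "\<forall>v. v \<notin> {0..<n} \<longrightarrow> fP n v = 0" by (simp add: fP_def)
  have z: "\<forall>v\<in>{0..<n}. fP n v = 0 \<longrightarrow> (\<Sum>u\<in>nbhd {0..<n} path_adj v. fP n u) \<ge> 2"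
    using fP_zero path_nb by simp
  have nz: "\<forall>v\<in>{0..<n}. fP n v \<in> {1,2} \<longrightarrow> (\<Sum>u\<in>nbhd {0..<n} path_adj v. fP n u) \<ge> 1"
    using fP_nz[OF _ assms] path_nb by simp
  show ?thesis unfolding is_211_dom_def using le out z nz by blast
qed

lemma fC_sc:
  assumes "v < n" "v mod 3 \<noteq> 1"
  shows "fC n (sc n v) = 1"
proof (cases "v + 1 < n")
  case True
  have "(v + 1) mod 3 \<noteq> 2" using assms(2) by (auto simp: mod_Suc split: if_splits)
  then show ?thesis using True by (simp add: sc_def fC_def)
next
  case False
  then show ?thesis using assms by (simp add: sc_def fC_def)
qed

lemma fC_pr:
  assumes "v < n" "v mod 3 \<noteq> 0"
  shows "fC n (pr n v) = 1"
proof -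
  have "v \<noteq> 0" using assms(2) by auto
  moreover have "(v - 1) mod 3 \<noteq> 2" using assms(2) by (cases v) (auto simp: mod_Suc)
  ultimately show ?thesis using assms(1) by (simp add: pr_def fC_def)
qed

lemma fC_dom:
  assumes "4 \<le> n"
  shows "is_211_dom {0..<n} (cycle_adj n) (fC n)"
proof -
  have n3: "3 \<le> n" using assms by simp
  have le: "fC n v \<le> 2" for v by (simp add: fC_def)
  have out: "\<forall>v. v \<notin> {0..<n} \<longrightarrow> fC n v = 0" by (simp add: fC_def)
  have zz: "2 \<le> fC n (sc n v) + fC n (pr n v)" if "v < n" "fC n v = 0" for v
  proof -
    have "v mod 3 = 2" using that by (auto simp: fC_def split: if_splits)
    then show ?thesis using fC_sc[of v n] fC_pr[of v n] that by simp
  qed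
  have nn: "1 \<le> fC n (sc n v) + fC n (pr n v)" if "v < n" for v
  proof (cases "v mod 3 = 1")
    case True
    then show ?thesis using fC_pr[of v n] that by simp
  next
    case False
    then show ?thesis using fC_sc[of v n] that by simp
  qed
  have z: "\<forall>v\<in>{0..<n}. fC n v = 0 \<longrightarrow> (\<Sum>u\<in>nbhd {0..<n} (cycle_adj n) v. fC n u) \<ge> 2"
  proof (intro ballI impI)
    fix v assume "v \<in> {0..<n}" "fC n v = 0"
    then show "(\<Sum>u\<in>nbhd {0..<n} (cycle_adj n) v. fC n u) \<ge> 2"
      using zz[of v] cyc_nb[of v n "fC n"] n3 by simp
  qed
  have nz: "\<forall>v\<in>{0..<n}. fC n v \<in> {1,2} \<longrightarrow> (\<Sum>u\<in>nbhd {0..<n} (cycle_adj n) v. fC n u) \<ge> 1"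
  proof (intro ballI impI)
    fix v assume "v \<in> {0..<n}"
    then show "(\<Sum>u\<in>nbhd {0..<n} (cycle_adj n) v. fC n u) \<ge> 1"
      using nn[of v] cyc_nb[of v n "fC n"] n3 by simp
  qed
  show ?thesis unfolding is_211_dom_def using le out z nz by blast
qed

lemma ceil3: "nat \<lceil>real n / 3\<rceil> = (n + 2) div 3"
proof -
  define q where "q = (n + 2) div 3"
  have e: "n + 2 = 3 * q + (n + 2) mod 3" unfolding q_def by simp
  have "(n + 2) mod 3 < 3" by simp
  then have a: "n \<le> 3 * q" "3 * q < n + 3" using e by linarith+
  then have b: "real n \<le> 3 * real q" "3 * real q < real n + 3" by linarith+
  have "\<lceil>real n / 3\<rceil> = int q"
    by (rule ceiling_unique) (use b in \<open>simp_all add: field_simps\<close>)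
  then show ?thesis unfolding q_def by simp
qed

lemma ceil23: "nat \<lceil>2 * real n / 3\<rceil> = (2 * n + 2) div 3"
proof -
  define q where "q = (2 * n + 2) div 3"
  have e: "2 * n + 2 = 3 * q + (2 * n + 2) mod 3" unfolding q_def by simp
  have "(2 * n + 2) mod 3 < 3" by simp
  then have a: "2 * n \<le> 3 * q" "3 * q < 2 * n + 3" using e by linarith+
  then have b: "2 * real n \<le> 3 * real q" "3 * real q < 2 * real n + 3" by linarith+
  have "\<lceil>2 * real n / 3\<rceil> = int q"
    by (rule ceiling_unique) (use b in \<open>simp_all add: field_simps\<close>)
  then show ?thesis unfolding q_def by simp
qed

lemma arithP1: "4 \<le> (n::nat) \<Longrightarrow> 2*n+2 \<le> 3*y \<Longrightarrow> n - (n-2) div 3 \<le> y"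
proof -
  assume a: "4 \<le> n" "2*n+2 \<le> 3*y"
  define q where "q = (n-2) div 3"
  have e: "n - 2 = 3*q + (n-2) mod 3" unfolding q_def by simp
  have "(n-2) mod 3 < 3" by simp
  then have "n \<le> 3*q+4" "3*q \<le> n" using e a by linarith+
  then have "3*(n-q) \<le> 3*y+2" using a by linarith
  then show ?thesis unfolding q_def by linarith
qed
lemma r3: obtains "(n::nat) = 3*(n div 3)" | "n = 3*(n div 3) + 1" | "n = 3*(n div 3) + 2"
proof -
  have m: "n = 3*(n div 3) + n mod 3" by simp
  have "n mod 3 < 3" by simp
  then consider "n mod 3 = 0" | "n mod 3 = 1" | "n mod 3 = 2" by linarith
  then show ?thesis
  proof cases
    case 1 show ?thesis using m 1 by (intro that(1)) simp
  next
    case 2 show ?thesis using m 2 by (intro that(2)) simp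
  next
    case 3 show ?thesis using m 3 by (intro that(3)) simp
  qed
qed
lemma arithP2: "4 \<le> (n::nat) \<Longrightarrow> n - (n-2) div 3 = (if n mod 3 = 0 then 2*n div 3 + 1 else 2*((n+2) div 3))"
proof -
  assume a: "4 \<le> n"
  define q where "q = n div 3"
  have q1: "1 \<le> q" using a unfolding q_def by linarith
  show ?thesis
  proof (cases rule: r3[of n])
    case 1
    then have n: "n = 3*q" unfolding q_def by simp
    have "n - 2 = 3*(q-1) + 1" using n q1 by simp
    then have "(n-2) div 3 = q - 1" by simp
    moreover have "2*n div 3 = 2*q" using n by simp
    moreover have "n mod 3 = 0" using n by simp
    ultimately show ?thesis using n q1 by simp
  next
    case 2
    then have n: "n = 3*q+1" unfolding q_def by simp
    have "n - 2 = 3*(q-1) + 2" using n q1 by simp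
    then have "(n-2) div 3 = q - 1" by simp
    moreover have "n + 2 = 3*(q+1)" using n by simp
    then have "(n+2) div 3 = q + 1" by simp
    moreover have "n = 3*q + n mod 3" unfolding q_def by simp
    then have "n mod 3 = 1" using n by linarith
    ultimately show ?thesis using n q1 by simp
  next
    case 3
    then have n: "n = 3*q+2" unfolding q_def by simp
    have "n - 2 = 3*q" using n by simp
    then have "(n-2) div 3 = q" by simp
    moreover have "n + 2 = 3*(q+1) + 1" using n by simp
    then have "(n+2) div 3 = q + 1" by simp
    moreover have "n = 3*q + n mod 3" unfolding q_def by simp
    then have "n mod 3 = 2" using n by linarith
    ultimately show ?thesis using n q1 by simp
  qed
qed
lemma arithC1: "(n::nat) - n div 3 = (2*n+2) div 3"
proof -
  define q where "q = n div 3"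
  show ?thesis
  proof (cases rule: r3[of n])
    case 1
    then have n: "n = 3*q" unfolding q_def by simp
    have "2*n+2 = 3*(2*q) + 2" using n by simp
    then have "(2*n+2) div 3 = 2*q" by simp
    moreover have "n div 3 = q" unfolding q_def ..
    ultimately show ?thesis using n by simp
  next
    case 2
    then have n: "n = 3*q+1" unfolding q_def by simp
    have "2*n+2 = 3*(2*q+1) + 1" using n by simp
    then have "(2*n+2) div 3 = 2*q+1" by simp
    moreover have "n div 3 = q" unfolding q_def ..
    ultimately show ?thesis using n by simp
  next
    case 3
    then have n: "n = 3*q+2" unfolding q_def by simp
    have "2*n+2 = 3*(2*q+2)" using n by simp
    then have "(2*n+2) div 3 = 2*q+2" by simp
    moreover have "n div 3 = q" unfolding q_def ..
    ultimately show ?thesis using n by simp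
  qed
qed
lemma arithC2: "2*(n::nat) \<le> 3*y \<Longrightarrow> (2*n+2) div 3 \<le> y"
proof -
  assume a: "2*n \<le> 3*y"
  have "3 * ((2*n+2) div 3) \<le> 2*n+2" by simp
  then show ?thesis using a by linarith
qed

theorem proposition12:
  fixes n :: nat
  assumes "n \<ge> 4"
  shows "gamma_211_graph (P n) =
           (if n mod 3 = 0 then 2 * n div 3 + 1 else 2 * nat \<lceil>real n / 3\<rceil>)
         \<and> gamma_211_graph (C n) = nat \<lceil>2 * real n / 3\<rceil>"
proof
  have "gamma_211_graph (P n) = (LEAST w. \<exists>f. is_211_dom {0..<n} path_adj f \<and> w = (\<Sum>v\<in>{0..<n}. f v))"
    by (simp add: gamma_211_graph_def gamma_211_def P_def)
  also have "\<dots> = n - (n - 2) div 3"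
  proof (rule Least_equality)
    show "\<exists>f. is_211_dom {0..<n} path_adj f \<and> n - (n - 2) div 3 = (\<Sum>v\<in>{0..<n}. f v)"
      using fP_dom[OF assms] fP_sum[of n] assms by (intro exI[of _ "fP n"]) (simp add: atLeast0LessThan)
  next
    fix y assume "\<exists>f. is_211_dom {0..<n} path_adj f \<and> y = (\<Sum>v\<in>{0..<n}. f v)"
    then obtain f where f: "is_211_dom {0..<n} path_adj f" "y = (\<Sum>v<n. f v)"
      by (auto simp: atLeast0LessThan)
    show "n - (n - 2) div 3 \<le> y"
      using path_lower[OF f(1) assms] f(2) arithP1[OF assms] by simp
  qed
  also have "\<dots> = (if n mod 3 = 0 then 2 * n div 3 + 1 else 2 * nat \<lceil>real n / 3\<rceil>)"
    using arithP2[OF assms] ceil3[of n] by simp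
  finally show "gamma_211_graph (P n) = (if n mod 3 = 0 then 2 * n div 3 + 1 else 2 * nat \<lceil>real n / 3\<rceil>)" .
next
  have "gamma_211_graph (C n) = (LEAST w. \<exists>f. is_211_dom {0..<n} (cycle_adj n) f \<and> w = (\<Sum>v\<in>{0..<n}. f v))"
    by (simp add: gamma_211_graph_def gamma_211_def C_def)
  also have "\<dots> = (2 * n + 2) div 3"
  proof (rule Least_equality)
    show "\<exists>f. is_211_dom {0..<n} (cycle_adj n) f \<and> (2 * n + 2) div 3 = (\<Sum>v\<in>{0..<n}. f v)"
      using fC_dom[OF assms] fC_sum[of n] arithC1[of n] by (intro exI[of _ "fC n"]) (simp add: atLeast0LessThan)
  next
    fix y assume "\<exists>f. is_211_dom {0..<n} (cycle_adj n) f \<and> y = (\<Sum>v\<in>{0..<n}. f v)"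
    then obtain f where f: "is_211_dom {0..<n} (cycle_adj n) f" "y = (\<Sum>v<n. f v)"
      by (auto simp: atLeast0LessThan)
    have "3 \<le> n" using assms by simp
    then show "(2 * n + 2) div 3 \<le> y"
      using cyc_lower[OF f(1)] f(2) arithC2 by simp
  qed
  also have "\<dots> = nat \<lceil>2 * real n / 3\<rceil>" using ceil23[of n] by simp
  finally show "gamma_211_graph (C n) = nat \<lceil>2 * real n / 3\<rceil>" .
qed

end
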